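(* Consider a deterministic solution of the Marker Problem with $K=1$ round of $T$ steps tolerating $f$ faults. For $n\in[N]$ let $X(n)$ be the set of processes that send or receive at least one message during the $T$ steps of the execution in which all processes are honest and the initially marked process $P_1$ receives input $I_1=n$. Let $n_1,n_2\in[N]\setminus\{1\}$ with $n_1\neq n_2$, and $D=X(n_1)\cap X(n_2)$. Then either (i) $P_{n_1}\in X(n_2)$ or $P_{n_2}\in X(n_1)$, or (ii) $|D|\ge f-1$.
   Context: Model. There are $N$ processes $P_1,\dots,P_N$; $[N]=\{1,\dots,N\}$. Time proceeds in discrete steps $t=0,1,2,\dots$ (synchronous network). At each step every process first receives all messages sent to it at the previous step, each together with the identity of its sender, and then may send messages to any processes; the behaviour of an honest process is given by its protocol, a deterministic function of its inputs and of all messages it has received so far. Communication is authenticated: a process $P_j$ can sign a string $m$, producing $(m)_{P_j}$; every sent message is signed by its sender; no process other than $P_j$ can produce a string containing $(m)_{P_j}$ unless it copied it from a message it received, except that corrupted processes can produce signatures of any corrupted process. An $f$-adversary knows all protocols and all inputs (including future inputs), chooses at time $0$ a set of at most $f$ processes to corrupt, and makes them behave arbitrarily subject to the signature rule; the other processes are honest and follow their protocol. $\mathcal H$ denotes the set of honest processes. A protocol tolerates $f$ faults if its required properties hold against every $f$-adversary. Marker Problem ($K$ rounds of $T$ steps). Time is divided into $K$ consecutive rounds of $T$ steps. At the end of each round every honest process decides either "unmarked" or "marked, with previous marked process $d$" where $d\in[N]\cup\{\perp\}$. The marked process $M$ of round $1$ is $P_1$ if $P_1\in\mathcal H$ and $\perp$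 otherwise; the marked process of round $i+1$ is the honest process that decided "marked" at the end of round $i$, or $\perp$ if there is none. At the beginning of round $i$, if $M\neq\perp$, $M$ receives an input $I_i\in[N]$ ("send the marker to $P_{I_i}$"). Required at the end of every round $i$: (consistency) at most one honest process decides it is marked; (liveness) if $M\in\mathcal H$, $I_i=n$ and $P_n\in\mathcal H$, then $P_n$ decides it is marked with previous marked process $M$; (non-impersonation) if $M=\perp$ and an honest process decides it is marked with previous marked process $d$, then $d\notin\mathcal H$. *)

theory Defs
  imports Main
begin

(* Processes are the natural numbers 1..N; P_1 is process 1. *)

(* Strings / messages: atoms, signatures (m)_{P_j} = Sig j m, and concatenation. *)
datatype msg = Atom nat | Sig nat msg | Pair msg msg

(* Decision at the end of a round: "unmarked" or "marked, with previous marked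
   process d", where d = None encodes \<bottom> and d = Some j encodes P_j. *)
datatype decision = Unmarked | Marked "nat option"

fun parts :: "msg \<Rightarrow> msg set" where
  "parts (Atom a) = {Atom a}"
| "parts (Sig j m) = insert (Sig j m) (parts m)"
| "parts (Pair a b) = insert (Pair a b) (parts a \<union> parts b)"

(* A trace records, for each step t, the set of triples (sender, recipient, payload)
   of messages sent at step t.  The recipient receives them at step t+1 as the
   signed string Sig sender payload (every sent message is signed by its sender). *)
type_synonym trace = "nat \<Rightarrow> (nat \<times> nat \<times> msg) set"

(* honest sending behaviour: process, its input, list of the message sets received
   at the previous steps  \<mapsto>  set of (recipient, payload) to send now *)
type_synonym send_protocol = "nat \<Rightarrow> nat option \<Rightarrow> msg set list \<Rightarrow> (nat \<times> msg) set"
type_synonym decide_protocol = "nat \<Rightarrow> nat option \<Rightarrow> msg set list \<Rightarrow> decision"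

definition recv :: "trace \<Rightarrow> nat \<Rightarrow> nat \<Rightarrow> msg set" where
  "recv tr i u = {Sig s m | s m. (s, i, m) \<in> tr u}"

definition hist :: "trace \<Rightarrow> nat \<Rightarrow> nat \<Rightarrow> msg set list" where
  "hist tr i t = map (recv tr i) [0..<t]"

definition copied :: "msg set list \<Rightarrow> msg \<Rightarrow> bool" where
  "copied h x \<longleftrightarrow> (\<exists>X\<in>set h. \<exists>y\<in>X. x \<in> parts y)"

(* signature rule: a process whose own signing keys are A and which has received h
   may send m only if every signature in m is by a member of A or copied *)
definition sig_ok :: "nat set \<Rightarrow> msg set list \<Rightarrow> msg \<Rightarrow> bool" where
  "sig_ok A h m \<longleftrightarrow> (\<forall>j m'. Sig j m' \<in> parts m \<longrightarrow> j \<in> A \<or> copied h (Sig j m'))"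

definition authentic_protocol :: "send_protocol \<Rightarrow> bool" where
  "authentic_protocol sendf \<longleftrightarrow>
     (\<forall>i inp h k m. (k, m) \<in> sendf i inp h \<longrightarrow> sig_ok {i} h m)"

(* inputs for K = 1: the marked process P_1 (if honest) receives I_1 = n *)
definition marker_input :: "nat set \<Rightarrow> nat \<Rightarrow> nat \<Rightarrow> nat option" where
  "marker_input C n i = (if i = 1 \<and> 1 \<notin> C then Some n else None)"

(* an execution of the T steps of round 1 with corrupted set C and input I_1 = n:
   honest processes follow the protocol, corrupted ones send arbitrary messages
   subject to the signature rule (they may sign for any corrupted process) *)
definition execution ::
  "nat \<Rightarrow> nat \<Rightarrow> send_protocol \<Rightarrow> nat set \<Rightarrow> nat \<Rightarrow> trace \<Rightarrow> bool" where
  "execution N T sendf C n tr \<longleftrightarrow>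
     C \<subseteq> {1..N} \<and>
     (\<forall>t<T. \<forall>(s, k, m)\<in>tr t. s \<in> {1..N} \<and> k \<in> {1..N}) \<and>
     (\<forall>t<T. \<forall>i\<in>{1..N} - C.
         {(k, m). (i, k, m) \<in> tr t} =
         {(k, m) \<in> sendf i (marker_input C n i) (hist tr i t). k \<in> {1..N}}) \<and>
     (\<forall>t<T. \<forall>(s, k, m)\<in>tr t. s \<in> C \<longrightarrow> sig_ok C (hist tr s t) m)"

definition solves_marker1 ::
  "nat \<Rightarrow> nat \<Rightarrow> nat \<Rightarrow> send_protocol \<Rightarrow> decide_protocol \<Rightarrow> bool" where
  "solves_marker1 N T f sendf dec \<longleftrightarrow>
     (\<forall>C n tr. card C \<le> f \<longrightarrow> n \<in> {1..N} \<longrightarrow> execution N T sendf C n tr \<longrightarrow>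
       (let H = {1..N} - C;
            d = (\<lambda>i. dec i (marker_input C n i) (hist tr i T))
        in card {i \<in> H. d i \<noteq> Unmarked} \<le> 1 \<and>
           (1 \<in> H \<and> n \<in> H \<longrightarrow> d n = Marked (Some 1)) \<and>
           (1 \<notin> H \<longrightarrow> (\<forall>i\<in>H. \<forall>j. d i = Marked (Some j) \<longrightarrow> j \<notin> H))))"

definition active :: "nat \<Rightarrow> trace \<Rightarrow> nat set" where
  "active T tr = {i. \<exists>t<T. \<exists>k m. (i, k, m) \<in> tr t \<or> (k, i, m) \<in> tr t}"

end

theory Submission
  imports Defs
begin

definition mtr :: "trace \<Rightarrow> trace \<Rightarrow> trace" where
  "mtr tr1 tr2 = (\<lambda>u. tr1 u \<union> tr2 u)"

lemma hist_mtr1: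
  assumes "i \<notin> active T tr2" "t \<le> T"
  shows "hist (mtr tr1 tr2) i t = hist tr1 i t"
  unfolding hist_def
proof (rule map_cong[OF refl])
  fix u assume "u \<in> set [0..<t]"
  then have "u < T" using assms(2) by auto
  then show "recv (mtr tr1 tr2) i u = recv tr1 i u"
    using assms(1) unfolding recv_def mtr_def active_def by blast
qed

lemma hist_mtr2:
  assumes "i \<notin> active T tr1" "t \<le> T"
  shows "hist (mtr tr1 tr2) i t = hist tr2 i t"
  unfolding hist_def
proof (rule map_cong[OF refl])
  fix u assume "u \<in> set [0..<t]"
  then have "u < T" using assms(2) by auto
  then show "recv (mtr tr1 tr2) i u = recv tr2 i u"
    using assms(1) unfolding recv_def mtr_def active_def by blast
qed

lemma copied_mono:
  assumes "copied (hist tr1 s t) x" "\<And>u. tr1 u \<subseteq> tr u"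
  shows "copied (hist tr s t) x"
proof -
  have "\<And>u. recv tr1 s u \<subseteq> recv tr s u" using assms(2) unfolding recv_def by blast
  then show ?thesis using assms(1) unfolding copied_def hist_def by fastforce
qed

lemma exec_sig:
  assumes "authentic_protocol sendf" "execution N T sendf {} n tr1"
    "t < T" "(s, k, m) \<in> tr1 t" "\<And>u. tr1 u \<subseteq> tr u" "s \<in> C"
  shows "sig_ok C (hist tr s t) m"
proof -
  have s: "s \<in> {1..N}" using assms(2-4) unfolding execution_def by fastforce
  have "(k, m) \<in> {(k, m). (s, k, m) \<in> tr1 t}" using assms(4) by simp
  then have "(k, m) \<in> sendf s (marker_input {} n s) (hist tr1 s t)"
    using assms(2,3) s unfolding execution_def by blast
  then have "sig_ok {s} (hist tr1 s t) m" using assms(1) unfolding authentic_protocol_def by blast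
  moreover have "\<And>x. copied (hist tr1 s t) x \<Longrightarrow> copied (hist tr s t) x"
    using copied_mono assms(5) by blast
  ultimately show ?thesis using assms(6) unfolding sig_ok_def by blast
qed

theorem mainTheorem6:
  fixes N T f n1 n2 :: nat
    and sendf :: send_protocol and dec :: decide_protocol
    and tr1 tr2 :: trace
  assumes "authentic_protocol sendf"
    and "solves_marker1 N T f sendf dec"
    and "n1 \<in> {1..N}" and "n2 \<in> {1..N}" and "n1 \<noteq> 1" and "n2 \<noteq> 1" and "n1 \<noteq> n2"
    and "execution N T sendf {} n1 tr1"
    and "execution N T sendf {} n2 tr2"
  shows "n1 \<in> active T tr2 \<or> n2 \<in> active T tr1 \<or>
         card (active T tr1 \<inter> active T tr2) \<ge> f - 1"
proof (rule ccontr)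
  assume "\<not> ?thesis"
  then have a1: "n1 \<notin> active T tr2" and a2: "n2 \<notin> active T tr1"
    and cd: "card (active T tr1 \<inter> active T tr2) < f - 1" by auto
  define A1 where "A1 = active T tr1"
  define A2 where "A2 = active T tr2"
  define C where "C = insert 1 (A1 \<inter> A2)"
  define tr where "tr = mtr tr1 tr2"
  have A1sub: "A1 \<subseteq> {1..N}" using assms(8) unfolding A1_def active_def execution_def by fastforce
  have N1: "1 \<in> {1..N}" using assms(3) by auto
  have Csub: "C \<subseteq> {1..N}" using A1sub N1 unfolding C_def by auto
  have fin: "finite (A1 \<inter> A2)" using A1sub finite_subset by blast
  have cC: "card C \<le> f" using cd fin unfolding C_def A1_def A2_def
    by (metis card_insert_le_m1 diff_le_self less_imp_le_nat le_trans card_insert_if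
        Suc_leI le_diff_conv less_diff_conv not_less_eq_eq)
  have sub1: "\<And>u. tr1 u \<subseteq> tr u" and sub2: "\<And>u. tr2 u \<subseteq> tr u"
    unfolding tr_def mtr_def by auto
  have mi: "\<And>i. marker_input C n1 i = None" unfolding marker_input_def C_def by auto
  have mi0: "\<And>n i. i \<noteq> 1 \<Longrightarrow> marker_input {} n i = None" unfolding marker_input_def by auto
  have exec: "execution N T sendf C n1 tr"
    unfolding execution_def
  proof (intro conjI allI impI ballI)
    show "C \<subseteq> {1..N}" by (rule Csub)
  next
    fix t x assume t: "t < T" and x: "x \<in> tr t"
    show "case x of (s, k, m) \<Rightarrow> s \<in> {1..N} \<and> k \<in> {1..N}"
      using x t assms(8,9) unfolding tr_def mtr_def execution_def by fastforce
  next
    fix t i assume t: "t < T" and i: "i \<in> {1..N} - C"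
    then have i1: "i \<noteq> 1" and iD: "i \<notin> A1 \<or> i \<notin> A2" unfolding C_def by auto
    show "{(k, m). (i, k, m) \<in> tr t} =
         {(k, m) \<in> sendf i (marker_input C n1 i) (hist tr i t). k \<in> {1..N}}"
    proof (cases "i \<notin> A2")
      case True
      have h: "hist tr i t = hist tr1 i t" unfolding tr_def
        using hist_mtr1[of i T tr2 t tr1] True t unfolding A2_def by simp
      have "{(k, m). (i, k, m) \<in> tr t} = {(k, m). (i, k, m) \<in> tr1 t}"
        using True t unfolding tr_def mtr_def A2_def active_def by blast
      also have "\<dots> = {(k, m) \<in> sendf i (marker_input {} n1 i) (hist tr1 i t). k \<in> {1..N}}"
        using assms(8) t i unfolding execution_def by blast
      finally show ?thesis using h mi mi0[OF i1] by simp
    next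
      case False
      then have F: "i \<notin> A1" using iD by auto
      have h: "hist tr i t = hist tr2 i t" unfolding tr_def
        using hist_mtr2[of i T tr1 t tr2] F t unfolding A1_def by simp
      have "{(k, m). (i, k, m) \<in> tr t} = {(k, m). (i, k, m) \<in> tr2 t}"
        using F t unfolding tr_def mtr_def A1_def active_def by blast
      also have "\<dots> = {(k, m) \<in> sendf i (marker_input {} n2 i) (hist tr2 i t). k \<in> {1..N}}"
        using assms(9) t i unfolding execution_def by blast
      finally show ?thesis using h mi mi0[OF i1] by simp
    qed
  next
    fix t x assume t: "t < T" and x: "x \<in> tr t"
    show "case x of (s, k, m) \<Rightarrow> s \<in> C \<longrightarrow> sig_ok C (hist tr s t) m"
    proof (cases x)
      case (fields s k m)
      show ?thesis
      proof (cases "x \<in> tr1 t")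
        case True
        then show ?thesis using exec_sig[OF assms(1) assms(8) t _ sub1] fields by auto
      next
        case False
        then have "x \<in> tr2 t" using x unfolding tr_def mtr_def by auto
        then show ?thesis using exec_sig[OF assms(1) assms(9) t _ sub2] fields by auto
      qed
    qed
  qed
  have live1: "dec n1 None (hist tr1 n1 T) = Marked (Some 1)"
  proof -
    have "n1 \<in> {1..N} - {}" "1 \<in> {1..N} - {}" using assms(3) N1 by auto
    then have "dec n1 (marker_input {} n1 n1) (hist tr1 n1 T) = Marked (Some 1)"
      using assms(2,3,8) unfolding solves_marker1_def Let_def by (metis card.empty le0)
    then show ?thesis using mi0[OF assms(5)] by simp
  qed
  have live2: "dec n2 None (hist tr2 n2 T) = Marked (Some 1)"
  proof -
    have "n2 \<in> {1..N} - {}" "1 \<in> {1..N} - {}" using assms(4) N1 by auto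
    then have "dec n2 (marker_input {} n2 n2) (hist tr2 n2 T) = Marked (Some 1)"
      using assms(2,4,9) unfolding solves_marker1_def Let_def by (metis card.empty le0)
    then show ?thesis using mi0[OF assms(6)] by simp
  qed
  have h1: "hist tr n1 T = hist tr1 n1 T" unfolding tr_def
    using hist_mtr1[of n1 T tr2 T tr1] a1 by simp
  have h2: "hist tr n2 T = hist tr2 n2 T" unfolding tr_def
    using hist_mtr2[of n2 T tr1 T tr2] a2 by simp
  define H where "H = {1..N} - C"
  have n1H: "n1 \<in> H" using assms(3,5) a1 unfolding H_def C_def A2_def by auto
  have n2H: "n2 \<in> H" using assms(4,6) a2 unfolding H_def C_def A1_def by auto
  have "card {i \<in> H. dec i (marker_input C n1 i) (hist tr i T) \<noteq> Unmarked} \<le> 1"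
    using assms(2) cC assms(3) exec unfolding solves_marker1_def Let_def H_def by blast
  moreover have "{n1, n2} \<subseteq> {i \<in> H. dec i (marker_input C n1 i) (hist tr i T) \<noteq> Unmarked}"
    using n1H n2H mi h1 h2 live1 live2 by auto
  moreover have "finite {i \<in> H. dec i (marker_input C n1 i) (hist tr i T) \<noteq> Unmarked}"
    unfolding H_def by auto
  ultimately have "card {n1, n2} \<le> 1" by (meson card_mono le_trans)
  then show False using assms(7) by simp
qed

end
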